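(* Let $p$ be a prime and $n$ a positive integer with $p\geq n$. Then $$I_{p^n}=\Big(p,\prod_{i=0}^{p-1}(X-i)\Big)^n.$$ That is, the polynomials in $\mathbb{Z}[X]$ whose fixed divisor is divisible by $p^n$ are exactly the elements of the $n$-th power of the ideal generated by $p$ and $X(X-1)\cdots(X-(p-1))$.
   Context: $I_{p^n}=p^n\mathrm{Int}(\mathbb{Z})\cap\mathbb{Z}[X]=\{f\in\mathbb{Z}[X] : p^n\mid f(a)\text{ for all }a\in\mathbb{Z}\}$, where $\mathrm{Int}(\mathbb{Z})=\{f\in\mathbb{Q}[X]: f(\mathbb{Z})\subseteq\mathbb{Z}\}$. *)

theory Defs
  imports "HOL-Computational_Algebra.Polynomial"
begin

inductive_set ideal_gen :: "'a::comm_ring_1 set \<Rightarrow> 'a set" for S where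
  zero: "0 \<in> ideal_gen S"
| gen: "s \<in> S \<Longrightarrow> s \<in> ideal_gen S"
| add: "x \<in> ideal_gen S \<Longrightarrow> y \<in> ideal_gen S \<Longrightarrow> x + y \<in> ideal_gen S"
| mult: "x \<in> ideal_gen S \<Longrightarrow> r * x \<in> ideal_gen S"

definition ideal_mult :: "'a::comm_ring_1 set \<Rightarrow> 'a set \<Rightarrow> 'a set" where
  "ideal_mult I J = ideal_gen {a * b | a b. a \<in> I \<and> b \<in> J}"

primrec ideal_pow :: "'a::comm_ring_1 set \<Rightarrow> nat \<Rightarrow> 'a set" where
  "ideal_pow I 0 = UNIV"
| "ideal_pow I (Suc n) = ideal_mult (ideal_pow I n) I"

definition I_pn :: "int \<Rightarrow> nat \<Rightarrow> int poly set" where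
  "I_pn p n = {f. \<forall>a::int. p ^ n dvd poly f a}"

end

theory Submission
  imports Defs
begin

definition FF :: "nat \<Rightarrow> int poly" where
  "FF k = (\<Prod>i<k. [:- int i, 1:])"

definition ff :: "nat \<Rightarrow> int \<Rightarrow> int" where
  "ff k x = (\<Prod>i<k. x - int i)"

definition cc :: "nat \<Rightarrow> nat \<Rightarrow> int" where
  "cc m k = (\<Prod>i<m. int k - int i)"

definition dlt :: "(int \<Rightarrow> int) \<Rightarrow> int \<Rightarrow> int" where
  "dlt g x = g (x+1) - g x"

lemma FF_deg: "degree (FF N) = N \<and> coeff (FF N) N = 1"
proof (induction N)
  case 0 then show ?case by (simp add: FF_def)
next
  case (Suc N)
  have e: "FF (Suc N) = FF N * [:- int N, 1:]" by (simp add: FF_def)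
  have nz: "FF N \<noteq> 0" using Suc by auto
  have d: "degree (FF (Suc N)) = Suc N" unfolding e using Suc nz
    by (subst degree_mult_eq) auto
  have "lead_coeff (FF (Suc N)) = 1" unfolding e lead_coeff_mult using Suc by simp
  with d show ?case by simp
qed

lemma poly_FF: "poly (FF k) x = ff k x"
  by (simp add: FF_def ff_def poly_prod)

lemma FF_repr: "\<forall>f. (\<forall>i\<ge>N. coeff f i = 0) \<longrightarrow> (\<exists>b. f = (\<Sum>k<N. smult (b k) (FF k)))"
proof (induction N)
  case 0
  then show ?case by (auto intro: poly_eqI)
next
  case (Suc N)
  show ?case
  proof (intro allI impI)
    fix f :: "int poly"
    assume h: "\<forall>i\<ge>Suc N. coeff f i = 0"
    define g where "g = f - smult (coeff f N) (FF N)"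
    have "\<forall>i\<ge>N. coeff g i = 0"
    proof (intro allI impI)
      fix i assume "N \<le> i"
      then consider "i = N" | "i > N" by linarith
      then show "coeff g i = 0"
      proof cases
        case 1 then show ?thesis using FF_deg[of N] by (simp add: g_def)
      next
        case 2
        then have "coeff (FF N) i = 0" using FF_deg[of N] coeff_eq_0 by metis
        then show ?thesis using h 2 by (simp add: g_def)
      qed
    qed
    then obtain b where b: "g = (\<Sum>k<N. smult (b k) (FF k))" using Suc.IH by blast
    have "f = (\<Sum>k<Suc N. smult ((b(N := coeff f N)) k) (FF k))"
      using b by (simp add: g_def algebra_simps)
    then show "\<exists>b. f = (\<Sum>k<Suc N. smult (b k) (FF k))" by blast
  qed
qed


lemma ff_dlt: "ff j (x+1) - ff j x = int j * ff (j-1) x"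
proof (cases j)
  case 0 then show ?thesis by (simp add: ff_def)
next
  case (Suc i)
  have a: "ff (Suc i) (x+1) = (x+1) * ff i x"
    unfolding ff_def by (subst prod.lessThan_Suc_shift) simp
  have b: "ff (Suc i) x = ff i x * (x - int i)" unfolding ff_def by simp
  show ?thesis using Suc a b by (simp add: algebra_simps)
qed

lemma cc_Suc: "cc m k * int (k - m) = cc (Suc m) k"
proof (cases "m \<le> k")
  case True then show ?thesis by (simp add: cc_def of_nat_diff)
next
  case False
  then have "cc m k = 0" unfolding cc_def by (intro prod_zero) (auto intro!: bexI[of _ k])
  moreover have "cc (Suc m) k = 0" using False unfolding cc_def by (intro prod_zero) (auto intro!: bexI[of _ k])
  ultimately show ?thesis by simp
qed

lemma dlt_pow: "(dlt ^^ m) (\<lambda>x. \<Sum>k<N. b k * ff k x) = (\<lambda>x. \<Sum>k<N. b k * cc m k * ff (k - m) x)"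
proof (induction m)
  case 0 then show ?case by (simp add: cc_def)
next
  case (Suc m)
  show ?case
  proof
    fix x
    have "(dlt ^^ Suc m) (\<lambda>x. \<Sum>k<N. b k * ff k x) x
        = dlt ((dlt ^^ m) (\<lambda>x. \<Sum>k<N. b k * ff k x)) x" by simp
    also have "\<dots> = (\<Sum>k<N. b k * cc m k * ff (k - m) (x+1)) - (\<Sum>k<N. b k * cc m k * ff (k - m) x)"
      by (simp only: Suc dlt_def)
    also have "\<dots> = (\<Sum>k<N. b k * cc m k * ff (k - m) (x+1) - b k * cc m k * ff (k - m) x)"
      by (simp only: sum_subtractf)
    also have "\<dots> = (\<Sum>k<N. b k * cc m k * (ff (k - m) (x+1) - ff (k-m) x))"
      by (simp only: right_diff_distrib)
    also have "\<dots> = (\<Sum>k<N. b k * cc (Suc m) k * ff (k - Suc m) x)"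
    proof (rule sum.cong)
      fix k assume "k \<in> {..<N}"
      have "ff (k - m) (x+1) - ff (k-m) x = int (k - m) * ff (k - Suc m) x"
        using ff_dlt[of "k-m" x] by (simp only: diff_diff_left Suc_eq_plus1)
      then show "b k * cc m k * (ff (k - m) (x+1) - ff (k-m) x) = b k * cc (Suc m) k * ff (k - Suc m) x"
        using cc_Suc[of m k] by (metis mult.assoc)
    qed simp
    finally show "(dlt ^^ Suc m) (\<lambda>x. \<Sum>k<N. b k * ff k x) x = (\<Sum>k<N. b k * cc (Suc m) k * ff (k - Suc m) x)" .
  qed
qed

lemma dlt_pow_dvd: "\<forall>x. q dvd g x \<Longrightarrow> q dvd (dlt ^^ m) g x"
  by (induction m arbitrary: x) (auto simp: dlt_def)

lemma cc_fact: "cc m m = fact m"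
proof -
  have "cc m m = (\<Prod>i<m. int (m - i))" unfolding cc_def by (intro prod.cong) (auto simp: of_nat_diff)
  also have "\<dots> = int (\<Prod>i = 0..<m. m - i)" by (simp add: lessThan_atLeast0)
  also have "\<dots> = fact m" by (simp add: fact_prod_rev)
  finally show ?thesis .
qed

lemma coeff_dvd:
  assumes "\<forall>x. q dvd (\<Sum>k<N. b k * ff k x)" and "m < N"
  shows "q dvd b m * fact m"
proof -
  have "q dvd (dlt ^^ m) (\<lambda>x. \<Sum>k<N. b k * ff k x) 0" using assms(1) by (rule dlt_pow_dvd)
  also have "(dlt ^^ m) (\<lambda>x. \<Sum>k<N. b k * ff k x) 0 = (\<Sum>k<N. b k * cc m k * ff (k - m) 0)"
    by (simp add: dlt_pow)
  also have "\<dots> = (\<Sum>k<N. if k = m then b m * fact m else 0)"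
  proof (rule sum.cong)
    fix k assume "k \<in> {..<N}"
    consider "k < m" | "k = m" | "k > m" by linarith
    then show "b k * cc m k * ff (k - m) 0 = (if k = m then b m * fact m else 0)"
    proof cases
      case 1
      then have "cc m k = 0" unfolding cc_def by (intro prod_zero) (auto intro!: bexI[of _ k])
      then show ?thesis using 1 by simp
    next
      case 2 then show ?thesis by (simp add: cc_fact ff_def)
    next
      case 3
      then have "ff (k - m) 0 = 0" unfolding ff_def by (intro prod_zero) (auto intro!: bexI[of _ 0])
      then show ?thesis using 3 by simp
    qed
  qed simp
  also have "\<dots> = b m * fact m" using assms(2) by simp
  finally show ?thesis .
qed


definition isid :: "'a::comm_ring_1 set \<Rightarrow> bool" where
  "isid S = (0 \<in> S \<and> (\<forall>x\<in>S. \<forall>y\<in>S. x + y \<in> S) \<and> (\<forall>r. \<forall>x\<in>S. r * x \<in> S))"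

lemma isid_gen: "isid (ideal_gen S)"
  unfolding isid_def by (auto intro: ideal_gen.intros)

lemma isid_pow: "isid (ideal_pow I n)"
  by (cases n) (auto simp: ideal_mult_def isid_gen, simp add: isid_def)

lemma isid_sum: "finite A \<Longrightarrow> isid S \<Longrightarrow> (\<forall>k\<in>A. g k \<in> S) \<Longrightarrow> sum g A \<in> S"
  by (induction A rule: finite_induct) (auto simp: isid_def)

lemma isid_mult: "isid S \<Longrightarrow> x \<in> S \<Longrightarrow> r * x \<in> S"
  by (auto simp: isid_def)

lemma isid_add: "isid S \<Longrightarrow> x \<in> S \<Longrightarrow> y \<in> S \<Longrightarrow> x + y \<in> S"
  by (auto simp: isid_def)

lemma pow_mult: "x \<in> ideal_pow I a \<Longrightarrow> y \<in> I \<Longrightarrow> x * y \<in> ideal_pow I (Suc a)"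
  by (auto simp: ideal_mult_def intro!: ideal_gen.gen)

lemma pow_mult_power: "x \<in> ideal_pow I a \<Longrightarrow> y \<in> I \<Longrightarrow> y ^ m * x \<in> ideal_pow I (a + m)"
proof (induction m)
  case 0 then show ?case by simp
next
  case (Suc m)
  have "(y ^ m * x) * y \<in> ideal_pow I (Suc (a + m))" using Suc by (intro pow_mult) auto
  then show ?case by (simp add: algebra_simps)
qed

lemma prod_shift:
  fixes a c :: "nat \<Rightarrow> int poly"
  shows "finite A \<Longrightarrow> \<exists>g. (\<Prod>i\<in>A. a i + [:q:] * c i) = (\<Prod>i\<in>A. a i) + [:q:] * g"
proof (induction A rule: finite_induct)
  case empty then show ?case by (auto intro: exI[of _ 0])
next
  case (insert x F)
  then obtain g where g: "(\<Prod>i\<in>F. a i + [:q:] * c i) = (\<Prod>i\<in>F. a i) + [:q:] * g" by blast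
  have "(\<Prod>i\<in>insert x F. a i + [:q:] * c i) = (a x + [:q:] * c x) * ((\<Prod>i\<in>F. a i) + [:q:] * g)"
    using insert g by simp
  also have "\<dots> = (\<Prod>i\<in>insert x F. a i) + [:q:] * (c x * (\<Prod>i\<in>F. a i) + a x * g + [:q:] * c x * g)"
    using insert by (simp add: algebra_simps)
  finally show ?case by blast
qed

lemma FF_split: "FF (a + b) = FF a * (\<Prod>i<b. [:- int (a + i), 1:])"
  by (induction b) (simp_all only: FF_def add_Suc_right add_0_right prod.lessThan_Suc lessThan_0 prod.empty mult_1_right mult.assoc)

context
  fixes p :: nat
  assumes pp: "prime p"
begin

abbreviation "JJ \<equiv> ideal_gen {[:int p:], FF p}"

lemma Pshift_J: "(\<Prod>i<p. [:- int (t * p + i), 1:]) \<in> JJ"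
proof -
  have e: "(\<Prod>i<p. [:- int (t * p + i), 1:]) = (\<Prod>i<p. [:- int i, 1:] + [:int p:] * [:- int t:])"
    by (intro prod.cong) (auto simp: algebra_simps)
  obtain g where g: "(\<Prod>i<p. [:- int i, 1:] + [:int p:] * [:- int t:]) = (\<Prod>i<p. [:- int i, 1:]) + [:int p:] * g"
    using prod_shift[of "{..<p}" "\<lambda>i. [:- int i, 1:]" "int p" "\<lambda>i. [:- int t:]"] by auto
  have "FF p \<in> JJ" by (auto intro: ideal_gen.gen)
  moreover have "g * [:int p:] \<in> JJ" by (rule ideal_gen.mult, rule ideal_gen.gen) simp
  ultimately have "FF p + g * [:int p:] \<in> JJ" by (rule ideal_gen.add)
  then show ?thesis using e g by (simp add: FF_def mult.commute)
qed

lemma FF_J: "FF (j * p) \<in> ideal_pow JJ j"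
proof (induction j)
  case 0 then show ?case by simp
next
  case (Suc j)
  have "FF (Suc j * p) = FF (j * p) * (\<Prod>i<p. [:- int (j * p + i), 1:])"
    using FF_split[of "j*p" p] by (simp add: add.commute)
  then show ?case using Suc.IH Pshift_J[of j] by (metis pow_mult)
qed

lemma fact_mult: "k < p * p \<Longrightarrow> \<exists>u. fact k = p ^ (k div p) * u \<and> coprime u p"
proof (induction k)
  case 0 then show ?case by simp
next
  case (Suc k)
  then obtain u where u: "fact k = p ^ (k div p) * u" "coprime u p" by auto
  have p1: "p > 1" using pp prime_gt_1_nat by blast
  show ?case
  proof (cases "p dvd Suc k")
    case True
    then obtain t where t: "Suc k = p * t" by blast
    have tp: "t < p" using Suc.prems unfolding t by simp
    have t0: "t > 0" using t by (cases t) auto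
    have d1: "Suc k div p = t" using t p1 by simp
    have d2: "k div p = t - 1"
    proof -
      have "k = (p - 1) + (t - 1) * p" using t t0 p1 by (cases t) (auto simp: algebra_simps)
      moreover have "((p - 1) + (t - 1) * p) div p = (t - 1) + (p - 1) div p"
        using p1 by (intro div_mult_self1) simp
      moreover have "(p - 1) div p = 0" using p1 by simp
      ultimately show ?thesis by simp
    qed
    have "\<not> p dvd t" using tp t0 by (auto dest: dvd_imp_le)
    then have "coprime p t" by (rule prime_imp_coprime[OF pp])
    then have "coprime t p" by (simp add: coprime_commute)
    then have cop: "coprime (t * u) p" using u(2) coprime_mult_left_iff by blast
    have "fact (Suc k) = Suc k * fact k" by simp
    also have "\<dots> = p * t * (p ^ (t - 1) * u)" using t u d2 by simp
    also have "\<dots> = p ^ (Suc k div p) * (t * u)" using d1 t0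
      by (cases t) (auto simp: algebra_simps)
    finally show ?thesis using cop by blast
  next
    case False
    have m1: "k mod p < p" using p1 by simp
    have m2: "Suc (k mod p) \<noteq> p"
    proof
      assume "Suc (k mod p) = p"
      moreover have "Suc k = k div p * p + Suc (k mod p)" using div_mult_mod_eq[of k p] by linarith
      ultimately have "Suc k = (k div p + 1) * p" by simp
      then show False using False by simp
    qed
    have sk: "Suc k = Suc (k mod p) + (k div p) * p" using div_mult_mod_eq[of k p] by simp
    have "Suc k div p = k div p + Suc (k mod p) div p"
      unfolding sk using p1 by (subst div_mult_self1) auto
    then have d: "Suc k div p = k div p" using m1 m2 by simp
    have "coprime p (Suc k)" using False by (rule prime_imp_coprime[OF pp])
    then have "coprime (Suc k) p" by (simp add: coprime_commute)
    then have cop: "coprime (Suc k * u) p" using u(2) coprime_mult_left_iff by blast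
    have "fact (Suc k) = p ^ (Suc k div p) * (Suc k * u)" using u d by (simp add: algebra_simps)
    then show ?thesis using cop by blast
  qed
qed


lemma term_J:
  assumes np: "n \<le> p" and dv: "int p ^ n dvd b * fact k"
  shows "smult b (FF k) \<in> ideal_pow JJ n"
proof (cases "n \<le> k div p")
  case True
  have "n * p \<le> k div p * p" using True by simp
  also have "\<dots> \<le> k" by simp
  finally have "n * p \<le> k" .
  then have "FF (n * p) dvd FF k" unfolding FF_def by (intro prod_dvd_prod_subset) auto
  then obtain Q where Q: "FF k = FF (n * p) * Q" by blast
  have "([:b:] * Q) * FF (n * p) \<in> ideal_pow JJ n"
    by (rule isid_mult[OF isid_pow FF_J])
  moreover have "smult b (FF (n * p) * Q) = [:b:] * Q * FF (n * p)" by (simp add: mult.commute)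
  ultimately show ?thesis using Q by simp
next
  case False
  define j where "j = k div p"
  have jn: "j < n" using False j_def by simp
  have p1: "p > 1" using pp prime_gt_1_nat by blast
  have "k mod p < p" using p1 by simp
  then have "k < (k div p + 1) * p" using div_mult_mod_eq[of k p] unfolding distrib_right by linarith
  also have "\<dots> \<le> n * p" using jn j_def by (metis Suc_eq_plus1 Suc_leI mult_le_mono1)
  also have "\<dots> \<le> p * p" using np by simp
  finally have kp: "k < p * p" .
  obtain u where u: "fact k = p ^ j * u" "coprime u p" using fact_mult[OF kp] j_def by blast
  have fk: "(fact k :: int) = int p ^ j * int u"
    using arg_cong[OF u(1), of int] by (simp add: of_nat_fact)
  have cop: "coprime (int p ^ n) (int u)" using u(2) by (simp add: coprime_commute)
  have "int p ^ n dvd b * int p ^ j * int u" using dv fk by (simp add: mult.assoc)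
  then have "int p ^ n dvd b * int p ^ j" using cop coprime_dvd_mult_left_iff by blast
  then have "int p ^ j * int p ^ (n - j) dvd int p ^ j * b"
    using jn by (simp add: power_add[symmetric] mult.commute)
  then have "int p ^ (n - j) dvd b" using p1 by simp
  then obtain b' where b': "b = int p ^ (n - j) * b'" by blast
  have "j * p \<le> k" using j_def by simp
  then have "FF (j * p) dvd FF k" unfolding FF_def by (intro prod_dvd_prod_subset) auto
  then obtain Q where Q: "FF k = FF (j * p) * Q" by blast
  have pJ: "[:int p:] \<in> JJ" by (rule ideal_gen.gen) simp
  have "[:int p:] ^ (n - j) * FF (j * p) \<in> ideal_pow JJ (j + (n - j))"
    by (rule pow_mult_power[OF FF_J pJ])
  moreover have "j + (n - j) = n" using jn by simp
  ultimately have "[:int p:] ^ (n - j) * FF (j * p) \<in> ideal_pow JJ n" by simp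
  then have "([:b':] * Q) * ([:int p:] ^ (n - j) * FF (j * p)) \<in> ideal_pow JJ n"
    by (rule isid_mult[OF isid_pow])
  moreover have "([:b':] * Q) * ([:int p:] ^ (n - j) * FF (j * p)) = smult b (FF k)"
    using Q b' by (simp add: poly_const_pow mult.commute mult.left_commute)
  ultimately show ?thesis by simp
qed

lemma P_dvd: "int p dvd poly (FF p) a"
proof -
  have p0: "p > 0" using pp prime_gt_0_nat by blast
  have mem: "nat (a mod int p) \<in> {..<p}" using p0 by (simp add: nat_less_iff)
  have d1: "(\<lambda>i. a - int i) (nat (a mod int p)) dvd (\<Prod>i<p. a - int i)"
    by (rule dvd_prodI) (simp_all only: mem finite_lessThan)
  have eq: "int (nat (a mod int p)) = a mod int p" using p0 by simp
  have d2: "int p dvd a - a mod int p" by (rule dvd_minus_mod)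
  have "int p dvd (\<Prod>i<p. a - int i)" using d1 d2 eq by (metis dvd_trans)
  moreover have "poly (FF p) a = (\<Prod>i<p. a - int i)" by (simp only: poly_FF ff_def)
  ultimately show ?thesis by simp
qed

lemma J_dvd: "g \<in> JJ \<Longrightarrow> int p dvd poly g a"
proof (induction g rule: ideal_gen.induct)
  case (gen s) then show ?case using P_dvd by auto
qed auto

lemma Jpow_dvd: "g \<in> ideal_pow JJ n \<Longrightarrow> int p ^ n dvd poly g a"
proof (induction n arbitrary: g a)
  case 0 then show ?case by simp
next
  case (Suc n)
  from Suc.prems have "g \<in> ideal_gen {x * y |x y. x \<in> ideal_pow JJ n \<and> y \<in> JJ}"
    by (simp add: ideal_mult_def)
  then show ?case
  proof (induction g rule: ideal_gen.induct)
    case (gen s)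
    then obtain x y where s: "s = x * y" "x \<in> ideal_pow JJ n" "y \<in> JJ" by blast
    have "int p ^ n * int p dvd poly x a * poly y a"
      using Suc.IH[OF s(2)] J_dvd[OF s(3)] by (rule mult_dvd_mono)
    then show ?case using s by (simp add: mult.commute)
  qed auto
qed

lemma sub_J:
  assumes np: "n \<le> p" and f: "f \<in> I_pn (int p) n"
  shows "f \<in> ideal_pow JJ n"
proof -
  define N where "N = Suc (degree f)"
  have "\<forall>i\<ge>N. coeff f i = 0" unfolding N_def by (auto intro: coeff_eq_0)
  then obtain b where b: "f = (\<Sum>k<N. smult (b k) (FF k))" using FF_repr by blast
  have pv: "poly f x = (\<Sum>k<N. b k * ff k x)" for x
    unfolding b by (simp only: poly_sum poly_smult poly_FF)
  have "\<forall>x. int p ^ n dvd (\<Sum>k<N. b k * ff k x)"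
  proof
    fix x
    have "int p ^ n dvd poly f x" using f unfolding I_pn_def by blast
    then show "int p ^ n dvd (\<Sum>k<N. b k * ff k x)" unfolding pv .
  qed
  then have "\<forall>k\<in>{..<N}. int p ^ n dvd b k * fact k" using coeff_dvd[where q="int p ^ n" and N=N and b=b] by blast
  then have "\<forall>k\<in>{..<N}. smult (b k) (FF k) \<in> ideal_pow JJ n" using term_J[OF np] by blast
  then have "(\<Sum>k<N. smult (b k) (FF k)) \<in> ideal_pow JJ n"
    by (intro isid_sum isid_pow) simp_all
  then show ?thesis using b by simp
qed

end

theorem mainTheorem13:
  fixes p :: nat and n :: nat
  assumes "prime p" and "n > 0" and "p \<ge> n"
  shows "I_pn (int p) n =
    ideal_pow (ideal_gen {[:int p:], (\<Prod>i<p. [:- int i, 1:])}) n"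
proof -
  have e: "(\<Prod>i<p. [:- int i, 1:]) = FF p" by (simp add: FF_def)
  show ?thesis unfolding e
  proof
    show "I_pn (int p) n \<subseteq> ideal_pow (ideal_gen {[:int p:], FF p}) n"
      using sub_J[OF assms(1) assms(3)] by blast
    show "ideal_pow (ideal_gen {[:int p:], FF p}) n \<subseteq> I_pn (int p) n"
      using Jpow_dvd[OF assms(1)] by (auto simp: I_pn_def)
  qed
qed

end
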